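(* With $T=\mathcal{P}_{\mathsf{ufs}}$, $FX=1+\mathbb{A}\times X+[\mathbb{A}]X$, $GX=2\times X^{\mathbb{A}}\times[\mathbb{A}]X$, let $(\mu F,\iota)=(\overline{\mathbb{A}}^*/{=_\alpha},\iota)$ be the initial $F$-algebra and $(\nu G,\tau)=(\mathcal{P}_{\mathsf{fs}}(\overline{\mathbb{A}}^*/{=_\alpha}),\tau)$ the terminal $G$-coalgebra. Let $e\colon\mathcal{P}_{\mathsf{ufs}}(\overline{\mathbb{A}}^*/{=_\alpha})\to\mathcal{P}_{\mathsf{fs}}(\overline{\mathbb{A}}^*/{=_\alpha})$ be the unique $G$-coalgebra homomorphism from $(\mathcal{P}_{\mathsf{ufs}}(\mu F),(\varepsilon_{\mu F}\cdot J\iota^{-1})^\sharp)$ to $(\nu G,\tau)$. Then $e$ is the inclusion map $\mathcal{P}_{\mathsf{ufs}}(\overline{\mathbb{A}}^*/{=_\alpha})\hookrightarrow\mathcal{P}_{\mathsf{fs}}(\overline{\mathbb{A}}^*/{=_\alpha})$.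
   Context: Fix a countably infinite set $\mathbb{A}$ of names; $\mathsf{Nom}$: nominal sets and equivariant maps; $1=\{*\}$, $2=\{0,1\}$; $[\mathbb{A}]X$ abstraction sets with classes $\langle a\rangle x$; $\mathcal{P}_{\mathsf{fs}}$, $\mathcal{P}_{\mathsf{ufs}}$ the finitely / uniformly finitely supported power sets, unit $\eta$ singleton, multiplication $\mu$ union. Bar strings: words over $\overline{\mathbb{A}}=\mathbb{A}\cup\{\mathord{|}a\}$; $=_\alpha$ the least equivalence with $x\,\mathord{|}a\,v=_\alpha x\,\mathord{|}b\,w$ whenever $\langle a\rangle v=\langle b\rangle w$; classes $[w]_\alpha$. $\iota( * )=[\varepsilon]_\alpha$, $\iota(a,[w]_\alpha)=[aw]_\alpha$, $\iota(\langle a\rangle[w]_\alpha)=[\mathord{|}a\,w]_\alpha$; $J\iota^{-1}=\eta\cdot\iota^{-1}$. $\tau(S)=(b,a\mapsto S_a,S_{\mathord{|}a})$ with $b=1$ iff $[\varepsilon]_\alpha\in S$, $S_a=\{[w]_\alpha:[aw]_\alpha\in S\}$, $S_{\mathord{|}a}=\langle a\rangle\{[w]_\alpha:[\mathord{|}a\,w]_\alpha\in S\}$ for $a$ fresh for $S$. $\varepsilon_X\colon\mathcal{P}_{\mathsf{ufs}}FX\to G\mathcal{P}_{\mathsf{ufs}}X$, $\varepsilon_X(S)=(b,a\mapsto\{s:(a,s)\in S\},\langle a\rangle\{s:\langle a\rangle s\in S\})$ with $b=1$ iff $*\in S$ and $a$ fresh for $S$. For an equivariant $g\colon X\to G\mathcal{P}_{\mathsf{ufs}}Y$,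 $g^\sharp\colon\mathcal{P}_{\mathsf{ufs}}X\to G\mathcal{P}_{\mathsf{ufs}}Y$ is its homomorphic extension w.r.t. the canonical $\mathcal{P}_{\mathsf{ufs}}$-algebra structure $G\mu_Y\cdot\rho_{\mathcal{P}_{\mathsf{ufs}}Y}$ on $G\mathcal{P}_{\mathsf{ufs}}Y$, i.e. $g^\sharp=G\mu_Y\cdot\rho_{\mathcal{P}_{\mathsf{ufs}}Y}\cdot\mathcal{P}_{\mathsf{ufs}}g$; concretely, for $U\in\mathcal{P}_{\mathsf{ufs}}X$ with $g(u)=(b_u,f_u,\langle a\rangle V_u)$ ($a$ fresh for $U$), $g^\sharp(U)=(\max_u b_u,\,a'\mapsto\bigcup_u f_u(a'),\,\langle a\rangle\bigcup_u V_u)$. Here $\rho_X(S)=(b,a\mapsto\{f(a):f\in p_1[S]\},\langle a\rangle\{s:\langle a\rangle s\in p_2[S]\})$ ($b=1$ iff $1\in p_0[S]$, $a$ fresh) is the distributive law of the canonical lifting of $G$. *)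

theory Defs
  imports Main
begin

text \<open>The countably infinite set of names A is modelled by nat. Nominal structure is given
  by the action of transpositions (swap a b); support and freshness are defined from it.\<close>

class swp =
  fixes sw :: "nat \<Rightarrow> nat \<Rightarrow> 'a \<Rightarrow> 'a"

instantiation nat :: swp begin
definition sw_nat_def: "sw a b (n::nat) = (if n = a then b else if n = b then a else n)"
instance ..
end

instantiation bool :: swp begin
definition sw_bool_def: "sw (a::nat) (b::nat) (x::bool) = x"
instance ..
end

instantiation unit :: swp begin
definition sw_unit_def: "sw (a::nat) (b::nat) (x::unit) = x"
instance ..
end

datatype bsym = Nm nat | Br nat   \<comment> \<open>a name a, or a bar name |a\<close>

instantiation bsym :: swp begin
definition sw_bsym_def:
  "sw a b s = (case s of Nm n \<Rightarrow> Nm (sw a b n) | Br n \<Rightarrow> Br (sw a b n))"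
instance ..
end

instantiation list :: (swp) swp begin
definition sw_list_def: "sw a b xs = map (sw a b) xs"
instance ..
end

instantiation set :: (swp) swp begin
definition sw_set_def: "sw a b X = sw a b ` X"
instance ..
end

instantiation prod :: (swp, swp) swp begin
definition sw_prod_def: "sw a b p = map_prod (sw a b) (sw a b) p"
instance ..
end

instantiation sum :: (swp, swp) swp begin
definition sw_sum_def: "sw a b p = map_sum (sw a b) (sw a b) p"
instance ..
end

instantiation "fun" :: (swp, swp) swp begin
definition sw_fun_def: "sw a b f = (\<lambda>x. sw a b (f (sw a b x)))"
instance ..
end

definition supp :: "'a::swp \<Rightarrow> nat set" where
  "supp x = {c. infinite {d. sw c d x \<noteq> x}}"

definition fresh :: "nat \<Rightarrow> 'a::swp \<Rightarrow> bool" where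
  "fresh c x \<longleftrightarrow> c \<notin> supp x"

text \<open>The abstraction <a>x is represented by its equivalence class
  {(b,y). (a,x) ~ (b,y)}, where (a,x) ~ (b,y) iff a = b and x = y, or b is fresh for x
  and (a b).x = y.\<close>

definition abstr :: "nat \<Rightarrow> 'a::swp \<Rightarrow> (nat \<times> 'a) set" where
  "abstr a x = {(b, y). (b = a \<and> y = x) \<or> (fresh b x \<and> y = sw a b x)}"

definition absmap :: "('a::swp \<Rightarrow> 'b::swp) \<Rightarrow> (nat \<times> 'a) set \<Rightarrow> (nat \<times> 'b) set" where
  "absmap f A = (case (SOME p. p \<in> A) of (a, x) \<Rightarrow> abstr a (f x))"

type_synonym word = "bsym list"
type_synonym cls = "word set"

definition alpha_step :: "word \<Rightarrow> word \<Rightarrow> bool" where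
  "alpha_step u v \<longleftrightarrow> (\<exists>x a b v' w'. u = x @ Br a # v' \<and> v = x @ Br b # w'
      \<and> abstr a v' = abstr b w')"

definition alpha :: "word \<Rightarrow> word \<Rightarrow> bool" where
  "alpha = (\<lambda>u v. alpha_step u v \<or> alpha_step v u)\<^sup>*\<^sup>*"

definition acls :: "word \<Rightarrow> cls" where
  "acls w = {v. alpha w v}"

definition muF :: "cls set" where
  "muF = range acls"

definition Pfs :: "cls set set" where
  "Pfs = {S. S \<subseteq> muF \<and> finite (supp S)}"

definition Pufs :: "cls set set" where
  "Pufs = {S. S \<subseteq> muF \<and> finite (\<Union> (supp ` S))}"

definition tau :: "cls set \<Rightarrow> bool \<times> (nat \<Rightarrow> cls set) \<times> (nat \<times> cls set) set" where
  "tau S = (acls [] \<in> S,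
            \<lambda>a. {acls w | w. acls (Nm a # w) \<in> S},
            (let c = (SOME c. fresh c S) in abstr c {acls w | w. acls (Br c # w) \<in> S}))"

text \<open>F X = 1 + A x X + [A]X is rendered as unit + (nat x X) + (nat x X) set.\<close>

definition iota :: "unit + (nat \<times> cls) + (nat \<times> cls) set \<Rightarrow> cls" where
  "iota z = (case z of
      Inl _ \<Rightarrow> acls []
    | Inr (Inl (a, c)) \<Rightarrow> acls (Nm a # (SOME w. w \<in> c))
    | Inr (Inr A) \<Rightarrow> (case (SOME p. p \<in> A) of (a, c) \<Rightarrow> acls (Br a # (SOME w. w \<in> c))))"

definition FmuF :: "(unit + (nat \<times> cls) + (nat \<times> cls) set) set" where
  "FmuF = {Inl ()} \<union> {Inr (Inl (a, c)) | a c. c \<in> muF} \<union> {Inr (Inr (abstr a c)) | a c. c \<in> muF}"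

definition iota_inv :: "cls \<Rightarrow> unit + (nat \<times> cls) + (nat \<times> cls) set" where
  "iota_inv = inv_into FmuF iota"

definition eps :: "(unit + (nat \<times> 'x::swp) + (nat \<times> 'x) set) set
      \<Rightarrow> bool \<times> (nat \<Rightarrow> 'x set) \<times> (nat \<times> 'x set) set" where
  "eps S = (Inl () \<in> S,
            \<lambda>a. {s. Inr (Inl (a, s)) \<in> S},
            (let c = (SOME c. fresh c S) in abstr c {s. Inr (Inr (abstr c s)) \<in> S}))"

definition rho :: "(bool \<times> (nat \<Rightarrow> 'x::swp) \<times> (nat \<times> 'x) set) set
      \<Rightarrow> bool \<times> (nat \<Rightarrow> 'x set) \<times> (nat \<times> 'x set) set" where
  "rho S = (True \<in> fst ` S,
            \<lambda>a. {f a | f. f \<in> (fst \<circ> snd) ` S},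
            (let c = (SOME c. fresh c S) in abstr c {s. abstr c s \<in> (snd \<circ> snd) ` S}))"

definition Gmu :: "bool \<times> (nat \<Rightarrow> 'y::swp set set) \<times> (nat \<times> 'y set set) set
      \<Rightarrow> bool \<times> (nat \<Rightarrow> 'y set) \<times> (nat \<times> 'y set) set" where
  "Gmu t = (case t of (b, f, A) \<Rightarrow> (b, \<lambda>a. \<Union> (f a), absmap Union A))"

definition sharp :: "('x \<Rightarrow> bool \<times> (nat \<Rightarrow> 'y::swp set) \<times> (nat \<times> 'y set) set)
      \<Rightarrow> 'x set \<Rightarrow> bool \<times> (nat \<Rightarrow> 'y set) \<times> (nat \<times> 'y set) set" where
  "sharp g U = Gmu (rho (g ` U))"

text \<open>The coalgebra (eps_{mu F} . J iota^{-1})# on P_ufs(mu F), with J iota^{-1} = eta . iota^{-1}.\<close>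
definition coalg :: "cls set \<Rightarrow> bool \<times> (nat \<Rightarrow> cls set) \<times> (nat \<times> cls set) set" where
  "coalg = sharp (\<lambda>u. eps {iota_inv u})"

definition Gmap :: "('a::swp \<Rightarrow> 'b::swp) \<Rightarrow> bool \<times> (nat \<Rightarrow> 'a) \<times> (nat \<times> 'a) set
      \<Rightarrow> bool \<times> (nat \<Rightarrow> 'b) \<times> (nat \<times> 'b) set" where
  "Gmap h t = (case t of (b, f, A) \<Rightarrow> (b, h \<circ> f, absmap h A))"

definition is_hom :: "(cls set \<Rightarrow> cls set) \<Rightarrow> bool" where
  "is_hom e \<longleftrightarrow> (\<forall>S\<in>Pufs. e S \<in> Pfs)
     \<and> (\<forall>a b. \<forall>S\<in>Pufs. e (sw a b S) = sw a b (e S))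
     \<and> (\<forall>S\<in>Pufs. tau (e S) = Gmap e (coalg S))"

end

theory Submission
  imports Defs
begin


definition swn :: "nat \<Rightarrow> nat \<Rightarrow> nat \<Rightarrow> nat" where
  "swn a b n = (if n = a then b else if n = b then a else n)"

lemma sw_nat_swn: "sw a b (n::nat) = swn a b n"
  by (simp add: sw_nat_def swn_def)

lemma swn_simps[simp]: "swn a b a = b" "swn a b b = a"
  "n \<noteq> a \<Longrightarrow> n \<noteq> b \<Longrightarrow> swn a b n = n" "swn a a n = n"
  "swn a b (swn a b n) = n"
  by (auto simp: swn_def)

lemma swn_inj[simp]: "swn a b x = swn a b y \<longleftrightarrow> x = y"
  by (auto simp: swn_def split: if_splits)

lemma swn_com: "swn a b n = swn b a n" by (auto simp: swn_def)

class nom = swp +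
  assumes sw_same[simp]: "sw a a x = x"
  and sw_inv[simp]: "sw a b (sw a b x) = x"
  and sw_com: "sw a b x = sw b a x"
  and sw_conj: "sw a b (sw c d x) = sw (swn a b c) (swn a b d) (sw a b x)"

instance nat :: nom
  by standard (auto simp: sw_nat_def swn_def)

instance bool :: nom by standard (auto simp: sw_bool_def)
instance unit :: nom by standard (auto simp: sw_unit_def)

lemma sw_bsym_simps[simp]: "sw a b (Nm n) = Nm (swn a b n)" "sw a b (Br n) = Br (swn a b n)"
  by (auto simp: sw_bsym_def sw_nat_swn)

instance bsym :: nom
proof
  fix a b c d :: nat and x :: bsym
  show "sw a a x = x" by (cases x) auto
  show "sw a b (sw a b x) = x" by (cases x) auto
  show "sw a b x = sw b a x" by (cases x) (auto simp: swn_com)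
  show "sw a b (sw c d x) = sw (swn a b c) (swn a b d) (sw a b x)"
    by (cases x) (auto simp: swn_def)
qed

instance list :: (nom) nom
proof
  fix a b c d :: nat and x :: "'a list"
  show "sw a a x = x" unfolding sw_list_def by (induct x) simp_all
  show "sw a b (sw a b x) = x" unfolding sw_list_def by (induct x) simp_all
  show "sw a b x = sw b a x" unfolding sw_list_def by (induct x) (simp_all, rule sw_com)
  show "sw a b (sw c d x) = sw (swn a b c) (swn a b d) (sw a b x)"
    unfolding sw_list_def by (induct x) (simp_all, rule sw_conj)
qed

instance set :: (nom) nom
proof
  fix a b c d :: nat and x :: "'a set"
  show "sw a a x = x" by (simp add: sw_set_def)
  show "sw a b (sw a b x) = x" by (simp add: sw_set_def image_image)
  show "sw a b x = sw b a x" unfolding sw_set_def by (rule image_cong[OF refl], rule sw_com)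
  show "sw a b (sw c d x) = sw (swn a b c) (swn a b d) (sw a b x)"
    unfolding sw_set_def image_image by (rule image_cong[OF refl], rule sw_conj)
qed

instance prod :: (nom, nom) nom
proof
  fix a b c d :: nat and x :: "'a \<times> 'b"
  show "sw a a x = x" by (cases x) (simp add: sw_prod_def)
  show "sw a b (sw a b x) = x" by (cases x) (simp add: sw_prod_def)
  show "sw a b x = sw b a x" by (cases x) (simp add: sw_prod_def, metis sw_com)
  show "sw a b (sw c d x) = sw (swn a b c) (swn a b d) (sw a b x)"
    by (cases x) (simp add: sw_prod_def, metis sw_conj)
qed

instance sum :: (nom, nom) nom
proof
  fix a b c d :: nat and x :: "'a + 'b"
  show "sw a a x = x" by (cases x) (auto simp: sw_sum_def)
  show "sw a b (sw a b x) = x" by (cases x) (auto simp: sw_sum_def)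
  show "sw a b x = sw b a x" by (cases x) (auto simp: sw_sum_def sw_com)
  show "sw a b (sw c d x) = sw (swn a b c) (swn a b d) (sw a b x)"
    by (cases x) (simp_all add: sw_sum_def, metis sw_conj, metis sw_conj)
qed

lemma sw_conj2: "sw c d (sw a b (x::'a::nom)) = sw a b (sw (swn a b c) (swn a b d) x)"
proof -
  have "sw a b (sw c d (sw a b x)) = sw (swn a b c) (swn a b d) x"
    using sw_conj[of a b c d "sw a b x"] by simp
  then show ?thesis by (metis sw_inv)
qed

instance "fun" :: (nom, nom) nom
proof
  fix a b c d :: nat and f :: "'a \<Rightarrow> 'b"
  show "sw a a f = f" by (auto simp: sw_fun_def)
  show "sw a b (sw a b f) = f" by (auto simp: sw_fun_def)
  show "sw a b f = sw b a f" unfolding sw_fun_def by (metis sw_com)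
  show "sw a b (sw c d f) = sw (swn a b c) (swn a b d) (sw a b f)"
    unfolding sw_fun_def by (rule ext) (metis sw_conj sw_conj2)
qed



lemma swn_swn_inj: "inj (swn a b)"
  by (rule injI) simp

lemma supp_sw: "c \<in> supp (sw a b (x::'a::nom)) \<longleftrightarrow> swn a b c \<in> supp x"
proof -
  have eq: "{d. sw c d (sw a b x) \<noteq> sw a b x} = swn a b ` {d. sw (swn a b c) d x \<noteq> x}"
  proof (rule set_eqI)
    fix d
    have "sw c d (sw a b x) = sw a b (sw (swn a b c) (swn a b d) x)" by (rule sw_conj2)
    then have "(sw c d (sw a b x) \<noteq> sw a b x) = (sw (swn a b c) (swn a b d) x \<noteq> x)"
      by (metis sw_inv)
    moreover have "d \<in> swn a b ` A \<longleftrightarrow> swn a b d \<in> A" for A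
      by (metis image_iff swn_simps(5))
    ultimately show "d \<in> {d. sw c d (sw a b x) \<noteq> sw a b x} \<longleftrightarrow> d \<in> swn a b ` {d. sw (swn a b c) d x \<noteq> x}"
      by simp
  qed
  show ?thesis unfolding supp_def using eq
    by (simp add: finite_image_iff[OF inj_on_subset[OF swn_swn_inj subset_UNIV]])
qed

lemma mem_sw_set: "p \<in> sw c d (A::'a::nom set) \<longleftrightarrow> sw c d p \<in> A"
proof
  assume "p \<in> sw c d A"
  then obtain q where "q \<in> A" "p = sw c d q" by (auto simp: sw_set_def)
  then show "sw c d p \<in> A" by simp
next
  assume "sw c d p \<in> A"
  then have "sw c d (sw c d p) \<in> sw c d ` A" by (rule imageI)
  then show "p \<in> sw c d A" by (simp add: sw_set_def)
qed

lemma sw_pair[simp]: "sw c d (x, y) = (sw c d x, sw c d y)"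
  by (simp add: sw_prod_def)

lemma fresh_sw: "fresh c (sw a b (x::'a::nom)) \<longleftrightarrow> fresh (swn a b c) x"
  by (simp add: fresh_def supp_sw)

lemma fresh_fix: assumes "c \<notin> supp (x::'a::nom)" "d \<notin> supp x" shows "sw c d x = x"
proof (cases "c = d")
  case True then show ?thesis by simp
next
  case False
  have f: "finite ({e. sw c e x \<noteq> x} \<union> {e. sw d e x \<noteq> x} \<union> {c, d})"
    using assms by (simp add: supp_def)
  obtain e where e: "e \<notin> {e. sw c e x \<noteq> x} \<union> {e. sw d e x \<noteq> x} \<union> {c, d}"
    using ex_new_if_finite[OF infinite_UNIV_nat f] by blast
  then have ce: "sw c e x = x" and de: "sw d e x = x" and "e \<noteq> c" "e \<noteq> d" by auto
  have "sw c e (sw d e (sw c e x)) = sw (swn c e d) (swn c e e) (sw c e (sw c e x))"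
    by (rule sw_conj)
  also have "\<dots> = sw d c x" using False \<open>e \<noteq> d\<close> by simp
  finally have "sw d c x = x" using ce de by simp
  then show ?thesis by (simp add: sw_com)
qed

lemma supp_mono: assumes "\<And>c d. sw c d (x::'a::nom) = x \<Longrightarrow> sw c d (y::'b::nom) = y"
  shows "supp y \<subseteq> supp x"
proof
  fix c assume "c \<in> supp y"
  then have "infinite {d. sw c d y \<noteq> y}" by (simp add: supp_def)
  moreover have "{d. sw c d y \<noteq> y} \<subseteq> {d. sw c d x \<noteq> x}" using assms by blast
  ultimately show "c \<in> supp x" unfolding supp_def using finite_subset by blast
qed

lemma supp_mono2: assumes "\<And>c d. sw c d (x1::'a::nom) = x1 \<Longrightarrow> sw c d (x2::'b::nom) = x2 \<Longrightarrow> sw c d (y::'c::nom) = y"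
  shows "supp y \<subseteq> supp x1 \<union> supp x2"
proof
  fix c assume "c \<in> supp y"
  then have "infinite {d. sw c d y \<noteq> y}" by (simp add: supp_def)
  moreover have "{d. sw c d y \<noteq> y} \<subseteq> {d. sw c d x1 \<noteq> x1} \<union> {d. sw c d x2 \<noteq> x2}" using assms by blast
  ultimately show "c \<in> supp x1 \<union> supp x2" unfolding supp_def using finite_subset by (metis (no_types, lifting) Un_iff finite_Un mem_Collect_eq)
qed

lemma supp_nat: "supp (n::nat) \<subseteq> {n}"
proof
  fix c assume c: "c \<in> supp n"
  show "c \<in> {n}"
  proof (rule ccontr)
    assume "c \<notin> {n}"
    then have "{d. sw c d n \<noteq> n} \<subseteq> {n}" by (auto simp: sw_nat_swn swn_def)
    then show False using c by (auto simp: supp_def dest: finite_subset)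
  qed
qed

lemma ex_fresh_fin: "finite (F::nat set) \<Longrightarrow> \<exists>c. c \<notin> F"
  using ex_new_if_finite[OF infinite_UNIV_nat] by blast

lemma fresh_some: assumes "finite (supp x)" shows "fresh (SOME c. fresh c x) x"
  using ex_fresh_fin[OF assms] by (metis fresh_def someI_ex)

lemma ufs_supp: assumes "finite (\<Union>(supp ` (S::'a::nom set)))" shows "supp S \<subseteq> \<Union>(supp ` S)"
proof
  fix c assume c: "c \<in> supp S"
  show "c \<in> \<Union>(supp ` S)"
  proof (rule ccontr)
    assume nc: "c \<notin> \<Union>(supp ` S)"
    have "{d. sw c d S \<noteq> S} \<subseteq> \<Union>(supp ` S)"
    proof
      fix d assume d: "d \<in> {d. sw c d S \<noteq> S}"
      show "d \<in> \<Union>(supp ` S)"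
      proof (rule ccontr)
        assume "d \<notin> \<Union>(supp ` S)"
        then have "\<forall>x\<in>S. sw c d x = x" using nc fresh_fix by blast
        then have "sw c d S = S" by (simp add: sw_set_def)
        then show False using d by simp
      qed
    qed
    then show False using c assms by (auto simp: supp_def dest: finite_subset)
  qed
qed

lemma ufs_fresh_elem: assumes "finite (\<Union>(supp ` (S::'a::nom set)))" "c \<notin> supp S" "x \<in> S"
  shows "c \<notin> supp x"
proof
  assume cx: "c \<in> supp x"
  have "finite ({d. sw c d S \<noteq> S} \<union> \<Union>(supp ` S) \<union> {c})"
    using assms(1,2) by (simp add: supp_def)
  then obtain d where d: "d \<notin> {d. sw c d S \<noteq> S} \<union> \<Union>(supp ` S) \<union> {c}"
    by (rule ex_fresh_fin[THEN exE])
  then have "sw c d S = S" by blast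
  then have "sw c d x \<in> S" using assms(3) unfolding sw_set_def by blast
  moreover have "d \<in> supp (sw c d x)" using cx by (simp add: supp_sw)
  ultimately have "d \<in> \<Union>(supp ` S)" by blast
  then show False using d by blast
qed

lemma ufs_fin: "finite (\<Union>(supp ` (S::'a::nom set))) \<Longrightarrow> finite (supp S)"
  using ufs_supp finite_subset by blast

section \<open>Abstractions\<close>

lemma abstr_mem_self: "(a, x) \<in> abstr a x" by (simp add: abstr_def)

lemma abstr_mem: "(b, y) \<in> abstr a x \<longleftrightarrow> (b = a \<and> y = x) \<or> (fresh b x \<and> y = sw a b x)"
  by (simp add: abstr_def)

lemma abstr_rename: assumes "fresh b (x::'a::nom)" shows "abstr b (sw a b x) = abstr a x"
proof (rule set_eqI)
  fix p :: "nat \<times> 'a" obtain e z where p: "p = (e, z)" by (cases p)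
  have "(e = b \<and> z = sw a b x \<or> fresh e (sw a b x) \<and> z = sw b e (sw a b x))
      \<longleftrightarrow> (e = a \<and> z = x \<or> fresh e x \<and> z = sw a e x)"
  proof (cases "e = b")
    case True then show ?thesis using assms by auto
  next
    case eb: False
    show ?thesis
    proof (cases "e = a")
      case True then show ?thesis using assms eb by (auto simp: fresh_sw sw_com[of b a])
    next
      case ea: False
      have fe: "fresh e (sw a b x) \<longleftrightarrow> fresh e x" using ea eb by (simp add: fresh_sw)
      have "fresh e x \<Longrightarrow> sw b e (sw a b x) = sw a e x"
      proof (cases "a = b")
        case True then show ?thesis by simp
      next
        case False
        assume fx: "fresh e x"
        have "sw b e (sw a b x) = sw (swn b e a) (swn b e b) (sw b e x)" by (rule sw_conj)
        also have "\<dots> = sw a e (sw b e x)" using ea eb False by simp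
        finally show ?thesis
          using assms fx fresh_fix[of b x e] by (simp add: fresh_def)
      qed
      then show ?thesis using fe ea eb by auto
    qed
  qed
  then show "p \<in> abstr b (sw a b x) \<longleftrightarrow> p \<in> abstr a x" by (simp add: p abstr_mem)
qed

lemma abstr_eq_cases: assumes "abstr a (x::'a::nom) = abstr b y"
  shows "(a = b \<and> x = y) \<or> (a \<noteq> b \<and> fresh b x \<and> y = sw a b x)"
proof -
  have "(b, y) \<in> abstr a x" using assms abstr_mem_self by metis
  then show ?thesis by (auto simp: abstr_mem)
qed

lemma abstr_welldef: assumes "p \<in> abstr a (x::'a::nom)" shows "abstr (fst p) (snd p) = abstr a x"
  using assms by (cases p) (auto simp: abstr_mem abstr_rename)

lemma abstr_sw: "sw c d (abstr a (x::'a::nom)) = abstr (swn c d a) (sw c d x)"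
proof (rule set_eqI)
  fix p :: "nat \<times> 'a" obtain b y where p: "p = (b, y)" by (cases p)
  have "p \<in> sw c d (abstr a x) \<longleftrightarrow> sw c d p \<in> abstr a x"
    by (rule mem_sw_set)
  also have "\<dots> \<longleftrightarrow> (swn c d b = a \<and> sw c d y = x) \<or> (fresh (swn c d b) x \<and> sw c d y = sw a (swn c d b) x)"
    unfolding p sw_pair sw_nat_swn abstr_mem ..
  also have "\<dots> \<longleftrightarrow> (b = swn c d a \<and> y = sw c d x) \<or> (fresh b (sw c d x) \<and> y = sw (swn c d a) b (sw c d x))"
  proof -
    have 1: "swn c d b = a \<longleftrightarrow> b = swn c d a" by auto
    have 2: "sw c d y = x \<longleftrightarrow> y = sw c d x" by auto
    have 3: "fresh (swn c d b) x \<longleftrightarrow> fresh b (sw c d x)" by (simp add: fresh_sw)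
    have "sw c d (sw a (swn c d b) x) = sw (swn c d a) b (sw c d x)" using sw_conj[of c d a "swn c d b" x] by simp
    then have 4: "sw c d y = sw a (swn c d b) x \<longleftrightarrow> y = sw (swn c d a) b (sw c d x)"
      by (metis sw_inv)
    show ?thesis using 1 2 3 4 by blast
  qed
  also have "\<dots> \<longleftrightarrow> p \<in> abstr (swn c d a) (sw c d x)" by (simp add: p abstr_mem)
  finally show "p \<in> sw c d (abstr a x) \<longleftrightarrow> p \<in> abstr (swn c d a) (sw c d x)" .
qed

lemma abstr_inj: "abstr a (x::'a::nom) = abstr a y \<Longrightarrow> x = y"
  using abstr_eq_cases by blast

lemma supp_abstr: "supp (abstr a (x::'a::nom)) \<subseteq> insert a (supp x)"
proof -
  have "supp (abstr a x) \<subseteq> supp a \<union> supp x"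
    by (rule supp_mono2) (simp add: abstr_sw sw_nat_swn)
  then show ?thesis using supp_nat[of a] by auto
qed

lemma fresh_abstr: assumes "fresh c (abstr a (x::'a::nom))" shows "c = a \<or> fresh c x"
proof (rule ccontr)
  assume "\<not> (c = a \<or> fresh c x)"
  then have ca: "c \<noteq> a" and cx: "c \<in> supp x" by (auto simp: fresh_def)
  have "{d. sw c d x \<noteq> x} - {a} \<subseteq> {d. sw c d (abstr a x) \<noteq> abstr a x}"
  proof
    fix d assume d: "d \<in> {d. sw c d x \<noteq> x} - {a}"
    then have "sw c d (abstr a x) = abstr a (sw c d x)" using ca by (simp add: abstr_sw)
    then show "d \<in> {d. sw c d (abstr a x) \<noteq> abstr a x}" using d abstr_inj by auto
  qed
  moreover have "infinite ({d. sw c d x \<noteq> x} - {a})" using cx by (simp add: supp_def)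
  ultimately have "c \<in> supp (abstr a x)" by (auto simp: supp_def dest: finite_subset)
  then show False using assms by (simp add: fresh_def)
qed

lemma supp_empty: "supp ({}::'a::nom set) = {}"
  by (simp add: supp_def sw_set_def)

lemma abstr_empty: "abstr c ({}::'a::nom set) = abstr 0 {}"
proof -
  have "abstr c (sw 0 c ({}::'a set)) = abstr 0 {}" by (rule abstr_rename) (simp add: fresh_def supp_empty)
  then show ?thesis by (simp add: sw_set_def)
qed

lemma absmap_abstr:
  assumes cl: "\<And>a b x. P x \<Longrightarrow> P (sw a b x)"
    and eq: "\<And>a b x. P x \<Longrightarrow> F (sw a b x) = sw a b (F x)"
    and PX: "P (X::'a::nom)"
  shows "absmap (F::'a \<Rightarrow> 'b::nom) (abstr c X) = abstr c (F X)"
proof -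
  define p where "p = (SOME p. p \<in> abstr c X)"
  have p: "p \<in> abstr c X" unfolding p_def by (rule someI, rule abstr_mem_self)
  obtain a' x' where p': "p = (a', x')" by (cases p)
  have sF: "supp (F X) \<subseteq> supp X"
    by (rule supp_mono) (metis eq PX)
  have "abstr a' (F x') = abstr c (F X)"
  proof -
    from p p' have "(a' = c \<and> x' = X) \<or> (fresh a' X \<and> x' = sw c a' X)" by (simp add: abstr_mem)
    then show ?thesis
    proof
      assume "a' = c \<and> x' = X" then show ?thesis by simp
    next
      assume h: "fresh a' X \<and> x' = sw c a' X"
      then have "F x' = sw c a' (F X)" using eq PX by simp
      moreover have "fresh a' (F X)" using h sF by (auto simp: fresh_def)
      ultimately show ?thesis by (simp add: abstr_rename)
    qed
  qed
  then show ?thesis by (simp add: absmap_def p_def[symmetric] p')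
qed



section \<open>Words\<close>

lemma swn_eq_iff[simp]: "swn a b y = b \<longleftrightarrow> y = a" "swn a b y = a \<longleftrightarrow> y = b"
  by (auto simp: swn_def)

fun sname :: "bsym \<Rightarrow> nat" where "sname (Nm n) = n" | "sname (Br n) = n"

definition names :: "word \<Rightarrow> nat set" where "names w = sname ` set w"

lemma sw_list_simps[simp]: "sw a b ([]::'a::nom list) = []" "sw a b ((x::'a::nom) # xs) = sw a b x # sw a b xs"
  "sw a b ((xs::'a::nom list) @ ys) = sw a b xs @ sw a b ys" "length (sw a b (xs::'a::nom list)) = length xs"
  by (simp_all add: sw_list_def)

lemma names_simps[simp]: "names [] = {}" "names (Nm n # w) = insert n (names w)" "names (Br n # w) = insert n (names w)"
  "names (x @ y) = names x \<union> names y"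
  by (auto simp: names_def)

lemma finite_names[simp]: "finite (names w)" by (simp add: names_def)

lemma names_sw: "names (sw a b w) = swn a b ` names w"
proof (induct w)
  case Nil then show ?case by simp
next
  case (Cons s w) then show ?case by (cases s) auto
qed

lemma sw_word_fix: "a \<notin> names w \<Longrightarrow> b \<notin> names w \<Longrightarrow> sw a b w = w"
proof (induct w)
  case Nil then show ?case by simp
next
  case (Cons s w) then show ?case by (cases s) auto
qed

lemma supp_word: "supp (w::word) = names w"
proof
  show "supp w \<subseteq> names w"
  proof
    fix c assume c: "c \<in> supp w"
    show "c \<in> names w"
    proof (rule ccontr)
      assume "c \<notin> names w"
      then have "{d. sw c d w \<noteq> w} \<subseteq> names w" using sw_word_fix by blast
      then have "finite {d. sw c d w \<noteq> w}" by (rule finite_subset) simp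
      then show False using c by (simp add: supp_def)
    qed
  qed
next
  show "names w \<subseteq> supp w"
  proof
    fix c assume c: "c \<in> names w"
    have "- names w \<subseteq> {d. sw c d w \<noteq> w}"
    proof
      fix d assume d: "d \<in> - names w"
      have "swn c d c \<in> swn c d ` names w" using c by (rule imageI)
      then have "d \<in> names (sw c d w)" by (simp add: names_sw)
      then show "d \<in> {d. sw c d w \<noteq> w}" using d by auto
    qed
    moreover have "infinite (- names w)" using finite_names finite_compl infinite_UNIV_nat by blast
    ultimately have "infinite {d. sw c d w \<noteq> w}" using finite_subset by blast
    then show "c \<in> supp w" by (simp add: supp_def)
  qed
qed

lemma fresh_word: "fresh c (w::word) \<longleftrightarrow> c \<notin> names w"
  by (simp add: fresh_def supp_word)

fun lk :: "nat list \<Rightarrow> nat \<Rightarrow> nat option" where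
  "lk [] y = None"
| "lk (z # E) y = (if y = z then Some 0 else map_option Suc (lk E y))"

lemma lk_None: "lk E y = None \<longleftrightarrow> y \<notin> set E"
  by (induct E) auto

lemma lk_inj: "lk E y = Some i \<Longrightarrow> lk E y' = Some i \<Longrightarrow> y = y'"
  by (induct E arbitrary: i) (auto split: if_splits)

lemma lk_swn: "lk (map (swn a b) E) (swn a b y) = lk E y"
  by (induct E) auto

datatype dsym = DF nat | DB nat | DBr

definition hd_of :: "nat list \<Rightarrow> nat \<Rightarrow> dsym" where
  "hd_of E y = (case lk E y of Some i \<Rightarrow> DB i | None \<Rightarrow> DF y)"

fun db :: "nat list \<Rightarrow> word \<Rightarrow> dsym list" where
  "db E [] = []"
| "db E (Nm y # w) = hd_of E y # db E w"
| "db E (Br z # w) = DBr # db (z # E) w"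

fun benv :: "nat list \<Rightarrow> word \<Rightarrow> nat list" where
  "benv E [] = E"
| "benv E (Nm y # w) = benv E w"
| "benv E (Br z # w) = benv (z # E) w"

lemma db_append: "db E (x @ u) = db E x @ db (benv E x) u"
  by (induct E x rule: benv.induct) simp_all

lemma benv_append: "benv E (x @ u) = benv (benv E x) u"
  by (induct E x rule: benv.induct) simp_all

lemma length_db[simp]: "length (db E w) = length w"
  by (induct E w rule: db.induct) simp_all

lemma hd_of_DF: "hd_of E y = DF x \<longleftrightarrow> x = y \<and> y \<notin> set E"
  using lk_None[of E y] by (cases "lk E y") (auto simp: hd_of_def)

lemma hd_of_DF': "DF x = hd_of E y \<longleftrightarrow> x = y \<and> y \<notin> set E"
  using hd_of_DF by metis

lemma hd_of_not_DBr[simp]: "hd_of E y \<noteq> DBr" "DBr \<noteq> hd_of E y"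
  by (auto simp: hd_of_def split: option.splits)

lemma hd_of_inj: "hd_of E y = hd_of E y' \<Longrightarrow> y = y'"
  by (auto simp: hd_of_def split: option.splits dest: lk_inj)

definition dsw :: "nat \<Rightarrow> nat \<Rightarrow> dsym \<Rightarrow> dsym" where
  "dsw a b s = (case s of DF y \<Rightarrow> DF (swn a b y) | _ \<Rightarrow> s)"

lemma dsw_inv[simp]: "dsw a b (dsw a b s) = s"
  by (cases s) (auto simp: dsw_def)

lemma map_dsw_inj: "map (dsw a b) xs = map (dsw a b) ys \<longleftrightarrow> xs = ys"
  by (metis (no_types, lifting) dsw_inv list.map_comp map_idI comp_apply)

lemma db_sw: "db (map (swn a b) E) (sw a b w) = map (dsw a b) (db E w)"
proof (induct E w rule: db.induct)
  case (2 E y w) then show ?case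
    by (auto simp: hd_of_def dsw_def lk_swn split: option.splits)
next
  case (3 E z w) then show ?case by (simp add: dsw_def)
qed simp

lemma db_sw_nil: "db [] (sw a b w) = map (dsw a b) (db [] w)"
  using db_sw[of a b "[]" w] by simp

lemma DF_mem: "DF y \<in> set (db E w) \<Longrightarrow> y \<in> names w \<and> y \<notin> set E"
  by (induct E w rule: db.induct) (auto simp: hd_of_DF')

lemma DF_mem_env: "(y \<in> set E1 \<longleftrightarrow> y \<in> set E2) \<Longrightarrow> (DF y \<in> set (db E1 w) \<longleftrightarrow> DF y \<in> set (db E2 w))"
proof (induct w arbitrary: E1 E2)
  case Nil then show ?case by simp
next
  case (Cons s w)
  show ?case
  proof (cases s)
    case (Nm x)
    have "hd_of E1 x = DF y \<longleftrightarrow> hd_of E2 x = DF y" using Cons.prems by (auto simp: hd_of_DF)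
    then show ?thesis using Cons Nm by (metis db.simps(2) set_ConsD list.set_intros)
  next
    case (Br z)
    have "y \<in> set (z # E1) \<longleftrightarrow> y \<in> set (z # E2)" using Cons.prems by simp
    then show ?thesis using Cons.hyps Br by simp
  qed
qed

lemma db_swap:
  "(\<forall>y\<in>names v. lk E y = lk E' (swn a b y)) \<Longrightarrow> (\<forall>y. DF y \<in> set (db E v) \<longrightarrow> swn a b y = y)
   \<Longrightarrow> db E v = db E' (sw a b v)"
proof (induct v arbitrary: E E')
  case Nil then show ?case by simp
next
  case (Cons s v)
  show ?case
  proof (cases s)
    case (Nm y)
    have l: "lk E y = lk E' (swn a b y)" using Cons.prems(1) Nm by simp
    have h: "hd_of E y = hd_of E' (swn a b y)"
    proof (cases "lk E y")
      case None
      then have "DF y \<in> set (db E (s # v))" using Nm by (simp add: hd_of_def)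
      then have "swn a b y = y" using Cons.prems(2) by blast
      then show ?thesis using l None by (simp add: hd_of_def)
    next
      case (Some i) then show ?thesis using l by (simp add: hd_of_def)
    qed
    have "db E v = db E' (sw a b v)"
      using Cons.hyps[of E E'] Cons.prems Nm by simp
    then show ?thesis using h Nm by (simp add: sw_nat_swn)
  next
    case (Br z)
    have 1: "\<forall>y\<in>names v. lk (z # E) y = lk (swn a b z # E') (swn a b y)"
      using Cons.prems(1) Br by auto
    have 2: "\<forall>y. DF y \<in> set (db (z # E) v) \<longrightarrow> swn a b y = y"
      using Cons.prems(2) Br by simp
    show ?thesis using Cons.hyps[OF 1 2] Br by simp
  qed
qed

lemma rename_db: "c \<notin> names p \<Longrightarrow> db (a # E) p = db (c # E) (sw a c p)"
proof (rule db_swap)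
  assume c: "c \<notin> names p"
  show "\<forall>y\<in>names p. lk (a # E) y = lk (c # E) (swn a c y)"
  proof
    fix y assume y: "y \<in> names p"
    then have "y \<noteq> c" using c by auto
    then show "lk (a # E) y = lk (c # E) (swn a c y)" by (cases "y = a") auto
  qed
  show "\<forall>y. DF y \<in> set (db (a # E) p) \<longrightarrow> swn a c y = y"
  proof (intro allI impI)
    fix y assume "DF y \<in> set (db (a # E) p)"
    then have "y \<in> names p" "y \<notin> set (a # E)" using DF_mem by blast+
    then have "y \<noteq> a" "y \<noteq> c" using c by auto
    then show "swn a c y = y" by simp
  qed
qed

section \<open>alpha equivalence\<close>

lemma alpha_refl: "alpha u u" by (simp add: alpha_def)

lemma alpha_trans: "alpha u v \<Longrightarrow> alpha v w \<Longrightarrow> alpha u w"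
  unfolding alpha_def by (rule rtranclp_trans)

lemma alpha_sym: "alpha u v \<Longrightarrow> alpha v u"
proof -
  have "symp (\<lambda>u v. alpha_step u v \<or> alpha_step v u)" by (auto intro: sympI)
  then have "symp alpha" unfolding alpha_def by (rule symp_rtranclp)
  then show "alpha u v \<Longrightarrow> alpha v u" by (rule sympD)
qed

lemma alpha_stepI: "alpha_step u v \<Longrightarrow> alpha u v"
  unfolding alpha_def by auto

lemma alpha_step_db: assumes "alpha_step u v" shows "db [] u = db [] v"
proof -
  obtain x a b v' w' where u: "u = x @ Br a # v'" and v: "v = x @ Br b # w'"
    and ab: "abstr a v' = abstr b w'" using assms alpha_step_def by blast
  from abstr_eq_cases[OF ab] show ?thesis
  proof
    assume "a = b \<and> v' = w'" then show ?thesis using u v by simp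
  next
    assume h: "a \<noteq> b \<and> fresh b v' \<and> w' = sw a b v'"
    then have "db (a # benv [] x) v' = db (b # benv [] x) w'"
      using rename_db[of b v' a] by (simp add: fresh_word)
    then show ?thesis using u v by (simp add: db_append)
  qed
qed

lemma alpha_imp_db: "alpha u v \<Longrightarrow> db [] u = db [] v"
  unfolding alpha_def
proof (induct rule: rtranclp_induct)
  case base then show ?case by simp
next
  case (step y z) then show ?case using alpha_step_db by metis
qed

lemma db_imp_alpha_gen: "db (benv [] z) p = db (benv [] z) q \<Longrightarrow> alpha (z @ p) (z @ q)"
proof (induction p arbitrary: z q rule: length_induct)
  case (1 p)
  show ?case
  proof (cases p)
    case Nil
    then have "q = []" using "1.prems" by (metis length_0_conv length_db)
    then show ?thesis using Nil by (simp add: alpha_refl)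
  next
    case (Cons s p')
    have "length q = length p" using "1.prems" by (metis length_db)
    then obtain t q' where q: "q = t # q'" using Cons by (cases q) auto
    show ?thesis
    proof (cases s)
      case (Nm y)
      then obtain y' where t: "t = Nm y'" and hh: "hd_of (benv [] z) y = hd_of (benv [] z) y'"
        and tl: "db (benv [] z) p' = db (benv [] z) q'"
        using "1.prems" Cons q by (cases t) auto
      have yy: "y' = y" using hd_of_inj[OF hh] by simp
      have "db (benv [] (z @ [Nm y])) p' = db (benv [] (z @ [Nm y])) q'"
        using tl by (simp add: benv_append)
      moreover have "length p' < length p" using Cons by simp
      ultimately have "alpha ((z @ [Nm y]) @ p') ((z @ [Nm y]) @ q')"
        using "1.IH" by blast
      then show ?thesis using Cons q t yy Nm by simp
    next
      case (Br a)
      then obtain b where t: "t = Br b" and tl: "db (a # benv [] z) p' = db (b # benv [] z) q'"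
        using "1.prems" Cons q by (cases t) auto
      obtain c where c: "c \<notin> names p' \<union> names q'" using ex_fresh_fin by (meson finite_Un finite_names)
      have s1: "alpha (z @ Br a # p') (z @ Br c # sw a c p')"
        apply (rule alpha_stepI) unfolding alpha_step_def
        using abstr_rename[of c p' a] c by (metis UnCI fresh_word)
      have s2: "alpha (z @ Br b # q') (z @ Br c # sw b c q')"
        apply (rule alpha_stepI) unfolding alpha_step_def
        using abstr_rename[of c q' b] c by (metis UnCI fresh_word)
      have "db (c # benv [] z) (sw a c p') = db (c # benv [] z) (sw b c q')"
        using tl rename_db[of c p' a] rename_db[of c q' b] c by simp
      then have "db (benv [] (z @ [Br c])) (sw a c p') = db (benv [] (z @ [Br c])) (sw b c q')"
        by (simp add: benv_append)
      moreover have "length (sw a c p') < length p" using Cons by simp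
      ultimately have "alpha ((z @ [Br c]) @ sw a c p') ((z @ [Br c]) @ sw b c q')"
        using "1.IH" by blast
      then have "alpha (z @ Br c # sw a c p') (z @ Br c # sw b c q')" by simp
      then show ?thesis using s1 s2 Cons q t Br by (meson alpha_sym alpha_trans)
    qed
  qed
qed

lemma alpha_iff: "alpha u v \<longleftrightarrow> db [] u = db [] v"
  using alpha_imp_db db_imp_alpha_gen[of "[]" u v] by auto

lemma mem_acls: "v \<in> acls w \<longleftrightarrow> db [] v = db [] w"
  by (auto simp: acls_def alpha_iff)

lemma acls_eq: "acls u = acls v \<longleftrightarrow> db [] u = db [] v"
  by (auto simp: acls_def alpha_iff)

lemma acls_self: "w \<in> acls w" by (simp add: mem_acls)

lemma acls_sw: "sw a b (acls w) = acls (sw a b w)"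
proof (rule set_eqI)
  fix v
  have "v \<in> sw a b (acls w) \<longleftrightarrow> db [] (sw a b v) = db [] w" by (simp add: mem_sw_set mem_acls)
  also have "\<dots> \<longleftrightarrow> map (dsw a b) (db [] v) = db [] w" by (simp add: db_sw_nil)
  also have "\<dots> \<longleftrightarrow> db [] v = map (dsw a b) (db [] w)"
    by (metis map_dsw_inj[of a b] dsw_inv list.map_comp map_idI comp_apply)
  also have "\<dots> \<longleftrightarrow> v \<in> acls (sw a b w)" by (simp add: mem_acls db_sw_nil)
  finally show "v \<in> sw a b (acls w) \<longleftrightarrow> v \<in> acls (sw a b w)" .
qed

definition fv :: "word \<Rightarrow> nat set" where "fv w = {y. DF y \<in> set (db [] w)}"

lemma fv_names: "fv w \<subseteq> names w" using DF_mem by (auto simp: fv_def)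

lemma supp_acls: "supp (acls w) = fv w"
proof
  show "supp (acls w) \<subseteq> fv w"
  proof
    fix c assume c: "c \<in> supp (acls w)"
    show "c \<in> fv w"
    proof (rule ccontr)
      assume nc: "c \<notin> fv w"
      have "{d. sw c d (acls w) \<noteq> acls w} \<subseteq> fv w"
      proof
        fix d assume d: "d \<in> {d. sw c d (acls w) \<noteq> acls w}"
        show "d \<in> fv w"
        proof (rule ccontr)
          assume nd: "d \<notin> fv w"
          have "\<forall>s\<in>set (db [] w). dsw c d s = s"
          proof
            fix s assume s: "s \<in> set (db [] w)"
            show "dsw c d s = s"
            proof (cases s)
              case (DF y)
              then have "y \<noteq> c" "y \<noteq> d" using s nc nd by (auto simp: fv_def)
              then show ?thesis using DF by (simp add: dsw_def)
            qed (simp_all add: dsw_def)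
          qed
          then have "map (dsw c d) (db [] w) = db [] w" by (simp add: map_idI)
          then have "db [] (sw c d w) = db [] w" unfolding db_sw_nil .
          then have "sw c d (acls w) = acls w" unfolding acls_sw acls_eq .
          then show False using d by simp
        qed
      qed
      moreover have "finite (fv w)" by (rule finite_subset[OF fv_names finite_names])
      ultimately have "finite {d. sw c d (acls w) \<noteq> acls w}" using finite_subset by blast
      then show False using c by (simp add: supp_def)
    qed
  qed
next
  show "fv w \<subseteq> supp (acls w)"
  proof
    fix c assume c: "c \<in> fv w"
    have "- names w \<subseteq> {d. sw c d (acls w) \<noteq> acls w}"
    proof
      fix d assume d: "d \<in> - names w"
      have "DF c \<in> set (db [] w)" using c by (simp add: fv_def)
      then have "dsw c d (DF c) \<in> set (map (dsw c d) (db [] w))" by simp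
      then have "DF d \<in> set (map (dsw c d) (db [] w))" by (simp add: dsw_def)
      moreover have "DF d \<notin> set (db [] w)" using d DF_mem by blast
      ultimately have "db [] (sw c d w) \<noteq> db [] w" unfolding db_sw_nil by metis
      then have "acls (sw c d w) \<noteq> acls w" unfolding acls_eq .
      then show "d \<in> {d. sw c d (acls w) \<noteq> acls w}" unfolding acls_sw by simp
    qed
    moreover have "infinite (- names w)" using finite_names finite_compl infinite_UNIV_nat by blast
    ultimately have "infinite {d. sw c d (acls w) \<noteq> acls w}" using finite_subset by blast
    then show "c \<in> supp (acls w)" by (simp add: supp_def)
  qed
qed

lemma finite_supp_acls: "finite (supp (acls w))"
  unfolding supp_acls by (rule finite_subset[OF fv_names finite_names])

lemma DF_single: "DF y \<in> set (db [b] w) \<longleftrightarrow> y \<noteq> b \<and> DF y \<in> set (db [] w)"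
proof (cases "y = b")
  case True then show ?thesis using DF_mem by fastforce
next
  case False then show ?thesis using DF_mem_env[of y "[b]" "[]" w] by simp
qed

lemma fv_simps: "fv [] = {}" "fv (Nm a # w) = insert a (fv w)" "fv (Br b # w) = fv w - {b}"
  by (auto simp: fv_def hd_of_def DF_single)

lemma acls_Br_rename: assumes "c \<notin> fv w" shows "acls (Br a # w) = acls (Br c # sw a c w)"
proof (cases "c = a")
  case True then show ?thesis by simp
next
  case False
  have "db [a] w = db [c] (sw a c w)"
  proof (rule db_swap)
    show "\<forall>y\<in>names w. lk [a] y = lk [c] (swn a c y)"
      using False by auto
    show "\<forall>y. DF y \<in> set (db [a] w) \<longrightarrow> swn a c y = y"
    proof (intro allI impI)
      fix y assume "DF y \<in> set (db [a] w)"
      then have "y \<noteq> a" "DF y \<in> set (db [] w)" by (simp_all add: DF_single)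
      then have "y \<noteq> c" using assms by (auto simp: fv_def)
      then show "swn a c y = y" using \<open>y \<noteq> a\<close> by simp
    qed
  qed
  then show ?thesis by (simp add: acls_eq)
qed

definition rel :: "nat list \<Rightarrow> nat list \<Rightarrow> nat \<Rightarrow> nat \<Rightarrow> bool" where
  "rel E1 E2 y y' = (case lk E1 y of Some i \<Rightarrow> lk E2 y' = Some i | None \<Rightarrow> lk E2 y' = None \<and> y = y')"

lemma hd_of_rel: "hd_of E1 y = hd_of E2 y' \<longleftrightarrow> rel E1 E2 y y'"
  by (auto simp: hd_of_def rel_def split: option.splits)

lemma rel_push: assumes "\<forall>y y'. rel E1 E2 y y' \<longrightarrow> rel F1 F2 y y'"
  shows "\<forall>y y'. rel (z # E1) (z' # E2) y y' \<longrightarrow> rel (z # F1) (z' # F2) y y'"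
proof (intro allI impI)
  fix y y' assume r: "rel (z # E1) (z' # E2) y y'"
  show "rel (z # F1) (z' # F2) y y'"
  proof (cases "y = z")
    case True
    then have "y' = z'" using r by (auto simp: rel_def split: if_splits)
    then show ?thesis using True by (simp add: rel_def)
  next
    case yz: False
    show ?thesis
    proof (cases "lk E1 y")
      case None
      then have "y' = y" "lk E2 y' = None" "y' \<noteq> z'" using r yz by (auto simp: rel_def split: if_splits)
      then have "rel E1 E2 y y'" using None by (simp add: rel_def)
      then have "rel F1 F2 y y'" using assms by blast
      then show ?thesis using yz \<open>y' \<noteq> z'\<close> by (auto simp: rel_def split: option.splits)
    next
      case (Some i)
      then have "lk E2 y' = Some i" "y' \<noteq> z'" using r yz by (auto simp: rel_def split: if_splits)
      then have "rel E1 E2 y y'" using Some by (simp add: rel_def)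
      then have "rel F1 F2 y y'" using assms by blast
      then show ?thesis using yz \<open>y' \<noteq> z'\<close> by (auto simp: rel_def split: option.splits)
    qed
  qed
qed

lemma db_transfer: "\<forall>y y'. rel E1 E2 y y' \<longrightarrow> rel F1 F2 y y' \<Longrightarrow> db E1 p = db E2 q \<Longrightarrow> db F1 p = db F2 q"
proof (induct p arbitrary: q E1 E2 F1 F2)
  case Nil then show ?case by (metis length_0_conv length_db)
next
  case (Cons s p)
  have "length q = length (s # p)" using Cons.prems(2) by (metis length_db)
  then obtain t q' where q: "q = t # q'" by (cases q) auto
  show ?case
  proof (cases s)
    case (Nm y)
    then obtain y' where t: "t = Nm y'" and h: "hd_of E1 y = hd_of E2 y'" and tl: "db E1 p = db E2 q'"
      using Cons.prems q by (cases t) auto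
    have "hd_of F1 y = hd_of F2 y'" using h Cons.prems(1) by (simp add: hd_of_rel)
    moreover have "db F1 p = db F2 q'" using Cons.hyps[OF Cons.prems(1) tl] .
    ultimately show ?thesis using Nm t q by simp
  next
    case (Br z)
    then obtain z' where t: "t = Br z'" and tl: "db (z # E1) p = db (z' # E2) q'"
      using Cons.prems q by (cases t) auto
    have "db (z # F1) p = db (z' # F2) q'" using Cons.hyps[OF rel_push[OF Cons.prems(1)] tl] .
    then show ?thesis using Br t q by simp
  qed
qed

lemma db_nil_to: "db [] p = db [] q \<Longrightarrow> db E p = db E q"
  by (erule db_transfer[rotated]) (auto simp: rel_def split: option.splits)

lemma db_single_to_nil: "db [c] p = db [c] q \<Longrightarrow> db [] p = db [] q"
  by (erule db_transfer[rotated]) (auto simp: rel_def split: option.splits if_splits)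

lemma acls_Br_cong: assumes "acls v = acls v'" shows "acls (Br b # v) = acls (Br b # v')"
proof -
  have "db [] v = db [] v'" using assms by (simp add: acls_eq)
  then have "db [b] v = db [b] v'" by (rule db_nil_to)
  then show ?thesis by (simp add: acls_eq)
qed

lemma acls_Nm_eq: "acls (Nm a # v) = acls (Nm a' # v') \<longleftrightarrow> a = a' \<and> acls v = acls v'"
  by (auto simp: acls_eq hd_of_def split: option.splits)

lemma acls_distinct: "acls [] \<noteq> acls (Nm a # v)" "acls [] \<noteq> acls (Br b # v)" "acls (Nm a # v) \<noteq> acls (Br b # v')"
  by (auto simp: acls_eq)

lemma acls_Br_eq: assumes "acls (Br b # v) = acls (Br b' # v')"
  shows "abstr b (acls v) = abstr b' (acls v')"
proof -
  obtain c where c: "c \<notin> names v \<union> names v'" using ex_fresh_fin by (meson finite_Un finite_names)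
  then have cf: "c \<notin> fv v" "c \<notin> fv v'" using fv_names by auto
  have "acls (Br c # sw b c v) = acls (Br c # sw b' c v')"
    using assms acls_Br_rename[OF cf(1), of b] acls_Br_rename[OF cf(2), of b'] by simp
  then have "db [c] (sw b c v) = db [c] (sw b' c v')" by (simp add: acls_eq)
  then have e: "acls (sw b c v) = acls (sw b' c v')"
    unfolding acls_eq by (rule db_single_to_nil)
  have "abstr b (acls v) = abstr c (acls (sw b c v))"
    using abstr_rename[of c "acls v" b] cf by (simp add: fresh_def supp_acls acls_sw)
  moreover have "abstr b' (acls v') = abstr c (acls (sw b' c v'))"
    using abstr_rename[of c "acls v'" b'] cf by (simp add: fresh_def supp_acls acls_sw)
  ultimately show ?thesis using e by simp
qed



lemma muF_cases:
  assumes "u \<in> muF"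
  obtains "u = acls []" | a v where "u = acls (Nm a # v)" | b v where "u = acls (Br b # v)"
proof -
  obtain w where w: "u = acls w" using assms by (auto simp: muF_def)
  show ?thesis
  proof (cases w)
    case Nil then show ?thesis using that w by blast
  next
    case (Cons s v) then show ?thesis using that w by (cases s) blast+
  qed
qed

lemma acls_muF[simp]: "acls w \<in> muF" by (simp add: muF_def)

lemma iota_Inl: "iota (Inl ()) = acls []" by (simp add: iota_def)

lemma iota_Nm: "iota (Inr (Inl (a, acls v))) = acls (Nm a # v)"
proof -
  have "(SOME w. w \<in> acls v) \<in> acls v" by (rule someI, rule acls_self)
  then have "acls (SOME w. w \<in> acls v) = acls v" by (simp add: mem_acls acls_eq)
  then show ?thesis by (simp add: iota_def acls_Nm_eq)
qed

lemma iota_Br: "iota (Inr (Inr (abstr b (acls v)))) = acls (Br b # v)"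
proof -
  define p where "p = (SOME p. p \<in> abstr b (acls v))"
  have p: "p \<in> abstr b (acls v)" unfolding p_def by (rule someI, rule abstr_mem_self)
  obtain a' c' where p': "p = (a', c')" by (cases p)
  have c': "c' = acls (sw b a' v)" and r: "acls (Br a' # sw b a' v) = acls (Br b # v)"
  proof -
    from p p' have "(a' = b \<and> c' = acls v) \<or> (fresh a' (acls v) \<and> c' = sw b a' (acls v))"
      by (simp add: abstr_mem)
    then have "(a' = b \<and> c' = acls v) \<or> (a' \<notin> fv v \<and> c' = acls (sw b a' v))"
      by (simp add: fresh_def supp_acls acls_sw)
    then show "c' = acls (sw b a' v)" "acls (Br a' # sw b a' v) = acls (Br b # v)"
      using acls_Br_rename[of a' v b] by auto
  qed
  have "(SOME w. w \<in> c') \<in> c'" unfolding c' by (rule someI, rule acls_self)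
  then have "acls (SOME w. w \<in> c') = acls (sw b a' v)" unfolding c' by (simp add: mem_acls acls_eq)
  then have "acls (Br a' # (SOME w. w \<in> c')) = acls (Br b # v)"
    using acls_Br_cong r by metis
  then show ?thesis by (simp add: iota_def p_def[symmetric] p')
qed

lemma FmuF_cases:
  assumes "z \<in> FmuF"
  obtains "z = Inl ()" | a v where "z = Inr (Inl (a, acls v))" | b v where "z = Inr (Inr (abstr b (acls v)))"
  using assms unfolding FmuF_def muF_def by blast

lemma acls_neq: "acls [] \<noteq> acls (Nm a # v)" "acls [] \<noteq> acls (Br b # v)" "acls (Nm a # v) \<noteq> acls (Br b # v')"
  "acls (Nm a # v) \<noteq> acls []" "acls (Br b # v) \<noteq> acls []" "acls (Br b # v') \<noteq> acls (Nm a # v)"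
  by (auto simp: acls_eq)

lemma iota_surj: "u \<in> muF \<Longrightarrow> u \<in> iota ` FmuF"
proof (erule muF_cases)
  assume u: "u = acls []"
  have m: "Inl () \<in> FmuF" by (simp add: FmuF_def)
  show ?thesis unfolding u by (rule image_eqI[of _ iota, OF iota_Inl[symmetric] m])
next
  fix a v assume u: "u = acls (Nm a # v)"
  have m: "Inr (Inl (a, acls v)) \<in> FmuF" unfolding FmuF_def using acls_muF by blast
  show ?thesis unfolding u by (rule image_eqI[of _ iota, OF iota_Nm[symmetric] m])
next
  fix b v assume u: "u = acls (Br b # v)"
  have m: "Inr (Inr (abstr b (acls v))) \<in> FmuF" unfolding FmuF_def using acls_muF by blast
  show ?thesis unfolding u by (rule image_eqI[of _ iota, OF iota_Br[symmetric] m])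
qed

lemma iota_inv_props: assumes "u \<in> muF" shows "iota_inv u \<in> FmuF" "iota (iota_inv u) = u"
  using iota_surj[OF assms] unfolding iota_inv_def
  by (rule inv_into_into, rule f_inv_into_f)

lemma iota_inv_nil: "iota_inv (acls []) = Inl ()"
proof -
  have z: "iota_inv (acls []) \<in> FmuF" "iota (iota_inv (acls [])) = acls []"
    using iota_inv_props[of "acls []"] by auto
  show ?thesis using z(1)
  proof (cases rule: FmuF_cases)
    case (2 a v) then show ?thesis using z(2) by (simp add: iota_Nm acls_neq)
  next
    case (3 b v) then show ?thesis using z(2) by (simp add: iota_Br acls_neq)
  qed
qed

lemma iota_inv_Nm: "iota_inv (acls (Nm a # v)) = Inr (Inl (a, acls v))"
proof -
  have z: "iota_inv (acls (Nm a # v)) \<in> FmuF" "iota (iota_inv (acls (Nm a # v))) = acls (Nm a # v)"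
    using iota_inv_props[of "acls (Nm a # v)"] by auto
  show ?thesis using z(1)
  proof (cases rule: FmuF_cases)
    case 1 then show ?thesis using z(2) by (simp add: iota_Inl acls_neq)
  next
    case (2 a' v') then show ?thesis using z(2) by (simp add: iota_Nm acls_Nm_eq)
  next
    case (3 b v') then show ?thesis using z(2) by (simp add: iota_Br acls_neq)
  qed
qed

lemma iota_inv_Br: "iota_inv (acls (Br b # v)) = Inr (Inr (abstr b (acls v)))"
proof -
  have z: "iota_inv (acls (Br b # v)) \<in> FmuF" "iota (iota_inv (acls (Br b # v))) = acls (Br b # v)"
    using iota_inv_props[of "acls (Br b # v)"] by auto
  show ?thesis using z(1)
  proof (cases rule: FmuF_cases)
    case 1 then show ?thesis using z(2) by (simp add: iota_Inl acls_neq)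
  next
    case (2 a' v') then show ?thesis using z(2) by (simp add: iota_Nm acls_neq)
  next
    case (3 b' v')
    then have "acls (Br b' # v') = acls (Br b # v)" using z(2) by (simp add: iota_Br)
    then have "abstr b' (acls v') = abstr b (acls v)" by (rule acls_Br_eq)
    then show ?thesis using 3 by simp
  qed
qed

lemma eps_Inl: "eps {Inl () :: unit + (nat \<times> 'x::nom) + (nat \<times> 'x) set} = (True, \<lambda>a. {}, abstr 0 {})"
  by (simp add: eps_def Let_def) (rule abstr_empty)

lemma eps_Nm: "eps {Inr (Inl (a, X)) :: unit + (nat \<times> 'x::nom) + (nat \<times> 'x) set}
   = (False, \<lambda>a'. if a' = a then {X} else {}, abstr 0 {})"
  by (simp add: eps_def Let_def fun_eq_iff) (rule abstr_empty)

lemma sw_single[simp]: "sw c d {x::'a::nom} = {sw c d x}"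
  by (simp add: sw_set_def)

lemma sw_empty[simp]: "sw c d ({}::'a::nom set) = {}"
  by (simp add: sw_set_def)

lemma sw_Inr_Inr[simp]: "sw c d (Inr (Inr A) :: 'a::nom + 'b::nom + 'c::nom) = Inr (Inr (sw c d A))"
  by (simp add: sw_sum_def)

lemma supp_single: "supp {x::'a::nom} = supp x"
proof
  show "supp {x} \<subseteq> supp x" by (rule supp_mono) simp
  show "supp x \<subseteq> supp {x}" by (rule supp_mono) simp
qed

lemma eps_Br:
  fixes X :: "'x::nom"
  assumes fin: "finite (supp X)"
  shows "eps {Inr (Inr (abstr b X)) :: unit + (nat \<times> 'x) + (nat \<times> 'x) set} = (False, \<lambda>_. {}, abstr b {X})"
proof -
  define z where "z = (Inr (Inr (abstr b X)) :: unit + (nat \<times> 'x) + (nat \<times> 'x) set)"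
  define c where "c = (SOME c. fresh c {z})"
  have sz: "supp {z} = supp (abstr b X)"
  proof
    show "supp {z} \<subseteq> supp (abstr b X)" unfolding z_def by (rule supp_mono) simp
    show "supp (abstr b X) \<subseteq> supp {z}" unfolding z_def by (rule supp_mono) simp
  qed
  have "finite (supp {z})" unfolding sz using supp_abstr[of b X] fin finite_subset by blast
  then have "fresh c {z}" unfolding c_def by (rule fresh_some)
  then have "fresh c (abstr b X)" by (simp add: fresh_def sz)
  then have cb: "c = b \<or> fresh c X" by (rule fresh_abstr)
  have set: "{s. Inr (Inr (abstr c s)) = z} = {sw b c X}"
  proof -
    have "abstr c s = abstr b X \<longleftrightarrow> s = sw b c X" for s
    proof
      assume "abstr c s = abstr b X"
      then have "abstr b X = abstr c s" by simp
      from abstr_eq_cases[OF this] show "s = sw b c X" by auto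
    next
      assume "s = sw b c X"
      then show "abstr c s = abstr b X" using cb abstr_rename[of c X b] by auto
    qed
    then show ?thesis by (auto simp: z_def)
  qed
  have "abstr c {sw b c X} = abstr b {X}"
    using cb abstr_rename[of c "{X}" b] by (auto simp: fresh_def supp_single)
  moreover have "Inl () \<noteq> z" "(\<lambda>a. {s. Inr (Inl (a, s)) = z}) = (\<lambda>_. {})" by (auto simp: z_def)
  ultimately show ?thesis
    by (simp add: eps_def Let_def c_def[symmetric] z_def[symmetric] set)
qed

definition gg :: "cls \<Rightarrow> bool \<times> (nat \<Rightarrow> cls set) \<times> (nat \<times> cls set) set" where
  "gg u = eps {iota_inv u}"

lemma gg_nil: "gg (acls []) = (True, \<lambda>a. {}, abstr 0 {})"
  by (simp add: gg_def iota_inv_nil eps_Inl)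

lemma gg_Nm: "gg (acls (Nm a # v)) = (False, \<lambda>a'. if a' = a then {acls v} else {}, abstr 0 {})"
  by (simp add: gg_def iota_inv_Nm eps_Nm)

lemma gg_Br: "gg (acls (Br b # v)) = (False, \<lambda>_. {}, abstr b {acls v})"
  by (simp add: gg_def iota_inv_Br eps_Br[OF finite_supp_acls])

lemma sw_abstr0: "sw c d (abstr 0 ({}::'a::nom set)) = abstr 0 {}"
  by (simp add: abstr_sw) (rule abstr_empty)

lemma sw_bool[simp]: "sw c d (x::bool) = x" by (simp add: sw_bool_def)

lemma sw_fun_empty: "sw c d (\<lambda>_::nat. ({}::'a::nom set)) = (\<lambda>_. {})"
  by (simp add: sw_fun_def)

lemma sw_fun_Nm: "sw c d (\<lambda>a'::nat. if a' = a then {acls v} else {}) = (\<lambda>a'. if a' = swn c d a then {acls (sw c d v)} else {})"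
proof (rule ext)
  fix x
  show "sw c d (\<lambda>a'::nat. if a' = a then {acls v} else {}) x = (if x = swn c d a then {acls (sw c d v)} else {})"
  proof (cases "x = swn c d a")
    case True then show ?thesis by (simp add: sw_fun_def sw_nat_swn acls_sw)
  next
    case False
    then have "swn c d x \<noteq> a" by auto
    then show ?thesis using False by (simp add: sw_fun_def sw_nat_swn)
  qed
qed

lemma acls_sw_simps: "sw c d (acls []) = acls []" "sw c d (acls (Nm a # v)) = acls (Nm (swn c d a) # sw c d v)"
  "sw c d (acls (Br b # v)) = acls (Br (swn c d b) # sw c d v)"
  by (simp_all add: acls_sw)

lemma gg_sw: assumes "u \<in> muF" shows "gg (sw c d u) = sw c d (gg u)"
  using assms
proof (cases rule: muF_cases)
  case 1 then show ?thesis by (simp add: acls_sw_simps gg_nil sw_abstr0 sw_fun_empty)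
next
  case (2 a v) then show ?thesis by (simp add: acls_sw_simps gg_Nm sw_abstr0 sw_fun_Nm)
next
  case (3 b v) then show ?thesis by (simp add: acls_sw_simps gg_Br sw_fun_empty abstr_sw acls_sw)
qed

lemma fresh_acls: "fresh c (acls v) \<longleftrightarrow> c \<notin> fv v"
  by (simp add: fresh_def supp_acls)

lemma gg_inj: "inj_on gg muF"
proof (rule inj_onI)
  fix u u' assume u: "u \<in> muF" and u': "u' \<in> muF" and e: "gg u = gg u'"
  show "u = u'" using u
  proof (cases rule: muF_cases)
    case 1
    show ?thesis using u'
    proof (cases rule: muF_cases)
      case 1 then show ?thesis using \<open>u = acls []\<close> by simp
    next
      case (2 a v) then show ?thesis using \<open>u = acls []\<close> e by (simp add: gg_nil gg_Nm)
    next
      case (3 b v) then show ?thesis using \<open>u = acls []\<close> e by (simp add: gg_nil gg_Br)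
    qed
  next
    case (2 a v)
    show ?thesis using u'
    proof (cases rule: muF_cases)
      case 1 then show ?thesis using 2 e by (simp add: gg_nil gg_Nm)
    next
      case (2 a' v')
      have "(\<lambda>x. if x = a then {acls v} else {}) = (\<lambda>x. if x = a' then {acls v'} else {})"
        using e 2 \<open>u = acls (Nm a # v)\<close> by (simp add: gg_Nm)
      from fun_cong[OF this, of a] have "(if a = a then {acls v} else {}) = (if a = a' then {acls v'} else {})" .
      then have "a = a'" "acls v = acls v'" by (auto split: if_splits)
      then show ?thesis using 2 \<open>u = acls (Nm a # v)\<close> by (simp add: acls_Nm_eq)
    next
      case (3 b' v')
      have "(\<lambda>x. if x = a then {acls v} else {}) = (\<lambda>x. ({}::cls set))"
        using e 3 \<open>u = acls (Nm a # v)\<close> by (simp add: gg_Nm gg_Br)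
      from fun_cong[OF this, of a] have "(if a = a then {acls v} else {}) = ({}::cls set)" .
      then show ?thesis by simp
    qed
  next
    case (3 b v)
    show ?thesis using u'
    proof (cases rule: muF_cases)
      case 1 then show ?thesis using 3 e by (simp add: gg_nil gg_Br)
    next
      case (2 a' v')
      have "(\<lambda>x. if x = a' then {acls v'} else {}) = (\<lambda>x. ({}::cls set))"
        using e 2 \<open>u = acls (Br b # v)\<close> by (simp add: gg_Nm gg_Br)
      from fun_cong[OF this, of a'] have "(if a' = a' then {acls v'} else {}) = ({}::cls set)" .
      then show ?thesis by simp
    next
      case (3 b' v')
      have ab: "abstr b {acls v} = abstr b' {acls v'}"
        using e 3 \<open>u = acls (Br b # v)\<close> by (simp add: gg_Br)
      from abstr_eq_cases[OF ab] show ?thesis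
      proof
        assume h: "b = b' \<and> {acls v} = {acls v'}"
        then have "acls v = acls v'" by simp
        then have "acls (Br b # v) = acls (Br b # v')" by (rule acls_Br_cong)
        then show ?thesis using 3 h \<open>u = acls (Br b # v)\<close> by simp
      next
        assume h: "b \<noteq> b' \<and> fresh b' {acls v} \<and> {acls v'} = sw b b' {acls v}"
        then have "acls v' = acls (sw b b' v)" by (simp add: acls_sw)
        moreover have "b' \<notin> fv v" using h by (simp add: fresh_def supp_single supp_acls)
        ultimately have "acls (Br b # v) = acls (Br b' # v')"
          using acls_Br_rename[of b' v b] acls_Br_cong[of v' "sw b b' v" b'] by (metis (no_types))
        then show ?thesis using 3 \<open>u = acls (Br b # v)\<close> by simp
      qed
    qed
  qed
qed

lemma sw_muF: assumes "S \<subseteq> muF" shows "sw c d S \<subseteq> muF"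
proof
  fix x assume "x \<in> sw c d S"
  then have "sw c d x \<in> S" by (simp add: mem_sw_set)
  then obtain w where w: "sw c d x = acls w" using assms by (auto simp: muF_def)
  have "x = sw c d (sw c d x)" by simp
  also have "\<dots> = sw c d (acls w)" using w by simp
  also have "\<dots> = acls (sw c d w)" by (rule acls_sw)
  finally have "x = acls (sw c d w)" .
  then show "x \<in> muF" by simp
qed

lemma supp_gg_img: assumes "S \<subseteq> muF" shows "supp (gg ` S) = supp S"
proof -
  have "sw c d (gg ` S) = gg ` (sw c d S)" for c d
  proof -
    have "sw c d (gg ` S) = (\<lambda>u. sw c d (gg u)) ` S" by (simp add: sw_set_def image_image)
    also have "\<dots> = (\<lambda>u. gg (sw c d u)) ` S" using assms gg_sw by (metis (no_types, lifting) image_cong subsetD)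
    also have "\<dots> = gg ` (sw c d S)" by (simp add: sw_set_def image_image)
    finally show ?thesis .
  qed
  moreover have "gg ` (sw c d S) = gg ` S \<longleftrightarrow> sw c d S = S" for c d
    using inj_on_image_eq_iff[OF gg_inj sw_muF[OF assms] assms] .
  ultimately have "\<And>c. {d. sw c d (gg ` S) \<noteq> gg ` S} = {d. sw c d S \<noteq> S}" by simp
  then show ?thesis by (simp add: supp_def)
qed

section \<open>P_ufs\<close>

lemma supp_sw_img: "supp (sw a b (x::'a::nom)) = swn a b ` supp x"
proof (rule set_eqI)
  fix c
  have "c \<in> swn a b ` supp x \<longleftrightarrow> swn a b c \<in> supp x"
    by (metis image_iff swn_simps(5))
  then show "c \<in> supp (sw a b x) \<longleftrightarrow> c \<in> swn a b ` supp x" by (simp add: supp_sw)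
qed

lemma Pufs_sw: assumes "S \<in> Pufs" shows "sw a b S \<in> Pufs"
proof -
  have "\<Union>(supp ` (sw a b S)) = \<Union>((\<lambda>x. supp (sw a b x)) ` S)"
    unfolding sw_set_def[of a b S] image_image ..
  also have "\<dots> = swn a b ` \<Union>(supp ` S)" unfolding supp_sw_img image_UN ..
  finally have "\<Union>(supp ` (sw a b S)) = swn a b ` \<Union>(supp ` S)" .
  then show ?thesis using assms sw_muF by (auto simp: Pufs_def)
qed

lemma Pufs_fin: "S \<in> Pufs \<Longrightarrow> finite (supp S)"
  by (simp add: Pufs_def ufs_fin)

lemma Pufs_elem: "S \<in> Pufs \<Longrightarrow> fresh c S \<Longrightarrow> x \<in> S \<Longrightarrow> fresh c x"
  unfolding Pufs_def fresh_def using ufs_fresh_elem by blast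

definition Nbar :: "nat \<Rightarrow> cls set \<Rightarrow> cls set" where
  "Nbar a T = {acls w | w. acls (Nm a # w) \<in> T}"

definition Ebar :: "nat \<Rightarrow> cls set \<Rightarrow> cls set" where
  "Ebar c T = {acls w | w. acls (Br c # w) \<in> T}"

lemma tau_eq: "tau T = (acls [] \<in> T, \<lambda>a. Nbar a T, abstr (SOME c. fresh c T) (Ebar (SOME c. fresh c T) T))"
  by (simp add: tau_def Nbar_def Ebar_def Let_def)

lemma mem_Nbar: "acls w \<in> Nbar a T \<longleftrightarrow> acls (Nm a # w) \<in> T"
  by (auto simp: Nbar_def acls_Nm_eq) (metis acls_Nm_eq)

lemma mem_Ebar: "acls w \<in> Ebar c T \<longleftrightarrow> acls (Br c # w) \<in> T"
proof
  assume "acls w \<in> Ebar c T"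
  then obtain w' where "acls w = acls w'" "acls (Br c # w') \<in> T" by (auto simp: Ebar_def)
  then show "acls (Br c # w) \<in> T" using acls_Br_cong by metis
qed (auto simp: Ebar_def)

lemma Ebar_sw: "sw x y (Ebar c T) = Ebar (swn x y c) (sw x y T)"
proof (rule set_eqI)
  fix z
  show "z \<in> sw x y (Ebar c T) \<longleftrightarrow> z \<in> Ebar (swn x y c) (sw x y T)"
  proof
    assume "z \<in> sw x y (Ebar c T)"
    then have "sw x y z \<in> Ebar c T" by (simp add: mem_sw_set)
    then obtain w where w: "sw x y z = acls w" "acls (Br c # w) \<in> T" by (auto simp: Ebar_def)
    have z: "z = acls (sw x y w)" using w(1) by (metis acls_sw sw_inv)
    have "sw x y (acls (Br (swn x y c) # sw x y w)) = acls (Br c # w)" by (simp add: acls_sw)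
    then have "acls (Br (swn x y c) # sw x y w) \<in> sw x y T" using w(2) by (simp add: mem_sw_set)
    then show "z \<in> Ebar (swn x y c) (sw x y T)" using z by (auto simp: Ebar_def)
  next
    assume "z \<in> Ebar (swn x y c) (sw x y T)"
    then obtain w where w: "z = acls w" "acls (Br (swn x y c) # w) \<in> sw x y T" by (auto simp: Ebar_def)
    then have "acls (Br c # sw x y w) \<in> T" by (simp add: mem_sw_set acls_sw)
    then have "sw x y z \<in> Ebar c T" using w(1) by (auto simp: Ebar_def acls_sw)
    then show "z \<in> sw x y (Ebar c T)" by (simp add: mem_sw_set)
  qed
qed

lemma supp_Ebar: "supp (Ebar c T) \<subseteq> insert c (supp T)"
proof -
  have "supp (Ebar c T) \<subseteq> supp c \<union> supp T"
    by (rule supp_mono2) (simp add: Ebar_sw sw_nat_swn)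
  then show ?thesis using supp_nat[of c] by auto
qed

lemma Nbar_Pufs: assumes "S \<in> Pufs" shows "Nbar a S \<in> Pufs"
proof -
  have "\<Union>(supp ` Nbar a S) \<subseteq> \<Union>(supp ` S)"
  proof
    fix c assume "c \<in> \<Union>(supp ` Nbar a S)"
    then obtain w where w: "acls (Nm a # w) \<in> S" "c \<in> supp (acls w)" by (auto simp: Nbar_def)
    then have "c \<in> supp (acls (Nm a # w))" by (simp add: supp_acls fv_simps)
    then show "c \<in> \<Union>(supp ` S)" using w(1) by blast
  qed
  then show ?thesis using assms by (auto simp: Pufs_def Nbar_def intro: finite_subset)
qed

lemma Ebar_Pufs: assumes "S \<in> Pufs" shows "Ebar c S \<in> Pufs"
proof -
  have "\<Union>(supp ` Ebar c S) \<subseteq> insert c (\<Union>(supp ` S))"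
  proof
    fix x assume "x \<in> \<Union>(supp ` Ebar c S)"
    then obtain w where w: "acls (Br c # w) \<in> S" "x \<in> supp (acls w)" by (auto simp: Ebar_def)
    then have "x = c \<or> x \<in> supp (acls (Br c # w))" by (simp add: supp_acls fv_simps)
    then show "x \<in> insert c (\<Union>(supp ` S))" using w(1) by blast
  qed
  then show ?thesis using assms by (auto simp: Pufs_def Ebar_def intro: finite_subset)
qed

lemma tau_third_any: assumes fin: "finite (supp T)" and c: "fresh c T"
  shows "abstr (SOME c. fresh c T) (Ebar (SOME c. fresh c T) T) = abstr c (Ebar c T)"
proof -
  define c0 where "c0 = (SOME c. fresh c T)"
  have c0: "fresh c0 T" unfolding c0_def using fin by (rule fresh_some)
  have "abstr c0 (Ebar c0 T) = abstr c (Ebar c T)"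
  proof (cases "c0 = c")
    case True then show ?thesis by simp
  next
    case False
    have "sw c0 c T = T" using c0 c by (simp add: fresh_def fresh_fix)
    then have e: "sw c0 c (Ebar c0 T) = Ebar c T" by (simp add: Ebar_sw)
    have "fresh c (Ebar c0 T)" using supp_Ebar[of c0 T] c False by (auto simp: fresh_def)
    then have "abstr c (sw c0 c (Ebar c0 T)) = abstr c0 (Ebar c0 T)" by (rule abstr_rename)
    then show ?thesis using e by simp
  qed
  then show ?thesis by (simp add: c0_def)
qed



lemma gg_fst: "u \<in> muF \<Longrightarrow> fst (gg u) = (u = acls [])"
  by (erule muF_cases) (simp_all add: gg_nil gg_Nm gg_Br acls_neq)

lemma gg_snd: assumes "u \<in> muF"
  shows "(x \<in> fst (snd (gg u)) a) = (\<exists>w. x = acls w \<and> u = acls (Nm a # w))"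
  using assms
proof (cases rule: muF_cases)
  case 1 then show ?thesis by (simp add: gg_nil acls_neq)
next
  case (2 a' v)
  have "(x \<in> (if a = a' then {acls v} else {})) = (\<exists>w. x = acls w \<and> a' = a \<and> acls v = acls w)"
    by auto
  then show ?thesis using 2 by (simp add: gg_Nm acls_Nm_eq)
next
  case (3 b v) then show ?thesis by (simp add: gg_Br acls_neq)
qed

lemma Union_eqvt: "\<Union> (sw a b X) = sw a b (\<Union> (X::'a::nom set set))"
  unfolding sw_set_def[of a b X] sw_set_def[of a b "\<Union>X"] by (auto simp: sw_set_def)

lemma gg_eq: "(\<lambda>u. eps {iota_inv u}) = gg"
  by (rule ext) (simp add: gg_def)

lemma coalg_eq: assumes S: "S \<in> Pufs" shows "coalg S = tau S"
proof -
  have Smu: "S \<subseteq> muF" using S by (simp add: Pufs_def)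
  define R where "R = gg ` S"
  have cR: "coalg S = Gmu (rho R)" by (simp add: coalg_def sharp_def R_def gg_eq)
  define c0 where "c0 = (SOME c. fresh c R)"
  define Y where "Y = {s. abstr c0 s \<in> (snd \<circ> snd) ` R}"
  have rho: "rho R = (True \<in> fst ` R, \<lambda>a. {f a | f. f \<in> (fst \<circ> snd) ` R}, abstr c0 Y)"
    by (simp add: rho_def Let_def c0_def Y_def)
  have F1: "(True \<in> fst ` R) = (acls [] \<in> S)"
  proof
    assume "True \<in> fst ` R"
    then obtain u where "u \<in> S" "fst (gg u) = True" by (auto simp: R_def)
    then show "acls [] \<in> S" using gg_fst Smu by auto
  next
    assume "acls [] \<in> S"
    then have "gg (acls []) \<in> R" unfolding R_def by (rule imageI)
    then have "fst (gg (acls [])) \<in> fst ` R" by (rule imageI)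
    then show "True \<in> fst ` R" by (simp add: gg_nil)
  qed
  have F2: "\<Union> {f a | f. f \<in> (fst \<circ> snd) ` R} = Nbar a S" for a
  proof (rule set_eqI)
    fix x
    have "x \<in> \<Union> {f a | f. f \<in> (fst \<circ> snd) ` R} \<longleftrightarrow> (\<exists>f\<in>(fst \<circ> snd) ` R. x \<in> f a)"
      by (simp add: Union_eq) blast
    also have "\<dots> \<longleftrightarrow> (\<exists>u\<in>S. x \<in> fst (snd (gg u)) a)"
      unfolding R_def image_image by simp
    also have "\<dots> \<longleftrightarrow> (\<exists>u\<in>S. \<exists>w. x = acls w \<and> u = acls (Nm a # w))"
    proof (rule bex_cong[OF refl])
      fix u assume "u \<in> S"
      then have "u \<in> muF" using Smu by blast
      then show "x \<in> fst (snd (gg u)) a \<longleftrightarrow> (\<exists>w. x = acls w \<and> u = acls (Nm a # w))" by (rule gg_snd)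
    qed
    also have "\<dots> \<longleftrightarrow> x \<in> Nbar a S" unfolding Nbar_def by blast
    finally show "x \<in> \<Union> {f a | f. f \<in> (fst \<circ> snd) ` R} \<longleftrightarrow> x \<in> Nbar a S" .
  qed
  have F3: "absmap Union (abstr c0 Y) = abstr c0 (\<Union> Y)"
    by (rule absmap_abstr[where P="\<lambda>_. True"]) (simp_all add: Union_eqvt)
  have finR: "finite (supp R)" unfolding R_def supp_gg_img[OF Smu] using S by (rule Pufs_fin)
  have "fresh c0 R" unfolding c0_def by (rule fresh_some[OF finR])
  then have F5: "fresh c0 S" by (simp add: fresh_def R_def supp_gg_img[OF Smu])
  have F4: "\<Union> Y = Ebar c0 S"
  proof (rule set_eqI, rule iffI)
    fix x assume "x \<in> \<Union> Y"
    then obtain s u where xs: "x \<in> s" and u: "u \<in> S" and su: "abstr c0 s = snd (snd (gg u))"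
      by (auto simp: Y_def R_def)
    have um: "u \<in> muF" using u Smu by blast
    show "x \<in> Ebar c0 S" using um
    proof (cases rule: muF_cases)
      case 1
      then have "abstr 0 {} = abstr c0 s" using su by (simp add: gg_nil)
      from abstr_eq_cases[OF this] have "s = {}" by auto
      then show ?thesis using xs by simp
    next
      case (2 a v)
      then have "abstr 0 {} = abstr c0 s" using su by (simp add: gg_Nm)
      from abstr_eq_cases[OF this] have "s = {}" by auto
      then show ?thesis using xs by simp
    next
      case (3 b v)
      then have "abstr b {acls v} = abstr c0 s" using su by (simp add: gg_Br)
      from abstr_eq_cases[OF this] show ?thesis
      proof
        assume "b = c0 \<and> {acls v} = s"
        then show ?thesis using xs u 3 by (auto simp: Ebar_def)
      next
        assume h: "b \<noteq> c0 \<and> fresh c0 {acls v} \<and> s = sw b c0 {acls v}"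
        then have x: "x = acls (sw b c0 v)" using xs by (simp add: acls_sw)
        have "c0 \<notin> fv v" using h by (simp add: fresh_def supp_single supp_acls)
        then have "acls (Br b # v) = acls (Br c0 # sw b c0 v)" by (rule acls_Br_rename)
        then show ?thesis using x u 3 by (auto simp: Ebar_def)
      qed
    qed
  next
    fix x assume "x \<in> Ebar c0 S"
    then obtain w where x: "x = acls w" and w: "acls (Br c0 # w) \<in> S" by (auto simp: Ebar_def)
    have "abstr c0 {acls w} = (snd \<circ> snd) (gg (acls (Br c0 # w)))" by (simp add: gg_Br)
    then have "{acls w} \<in> Y" unfolding Y_def R_def using w by blast
    then show "x \<in> \<Union> Y" using x by blast
  qed
  have F6: "tau S = (acls [] \<in> S, \<lambda>a. Nbar a S, abstr c0 (Ebar c0 S))"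
    unfolding tau_eq tau_third_any[OF Pufs_fin[OF S] F5] ..
  show ?thesis unfolding cR rho F6 Gmu_def prod.case F1 F2 F3 F4 ..
qed

theorem lemma4p21:
  shows "is_hom (\<lambda>S. S) \<and> (\<forall>e. is_hom e \<longrightarrow> (\<forall>S\<in>Pufs. e S = S))"
proof
  show "is_hom (\<lambda>S. S)" unfolding is_hom_def
  proof (intro conjI ballI allI)
    fix S assume S: "S \<in> Pufs"
    then show "S \<in> Pfs" by (simp add: Pfs_def Pufs_def ufs_fin)
    show "tau S = Gmap (\<lambda>S. S) (coalg S)"
    proof -
      have "absmap (\<lambda>S. S) (abstr (SOME c. fresh c S) (Ebar (SOME c. fresh c S) S))
          = abstr (SOME c. fresh c S) (Ebar (SOME c. fresh c S) S)"
        by (rule absmap_abstr[where P="\<lambda>_. True"]) simp_all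
      then show ?thesis unfolding coalg_eq[OF S] tau_eq by (simp add: Gmap_def comp_def)
    qed
  qed simp
next
  show "\<forall>e. is_hom e \<longrightarrow> (\<forall>S\<in>Pufs. e S = S)"
  proof (intro allI impI ballI)
    fix e S assume he: "is_hom e" and S0: "S \<in> Pufs"
    have hPfs: "\<And>S. S \<in> Pufs \<Longrightarrow> e S \<in> Pfs" using he by (simp add: is_hom_def)
    have heq: "\<And>a b S. S \<in> Pufs \<Longrightarrow> e (sw a b S) = sw a b (e S)" using he by (simp add: is_hom_def)
    have htau: "\<And>S. S \<in> Pufs \<Longrightarrow> tau (e S) = Gmap e (coalg S)" using he by (simp add: is_hom_def)
    have key: "\<forall>S\<in>Pufs. (acls w \<in> e S \<longleftrightarrow> acls w \<in> S)" for w
    proof (induction w rule: length_induct)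
      case (1 w)
      show ?case
      proof
        fix S assume S: "S \<in> Pufs"
        define c where "c = (SOME c. fresh c (e S))"
        define c' where "c' = (SOME c. fresh c S)"
        have finS: "finite (supp S)" using S by (rule Pufs_fin)
        have finE: "finite (supp (e S))" using hPfs[OF S] by (simp add: Pfs_def)
        have fc: "fresh c (e S)" unfolding c_def using finE by (rule fresh_some)
        have fc': "fresh c' S" unfolding c'_def using finS by (rule fresh_some)
        have am: "absmap e (abstr c' (Ebar c' S)) = abstr c' (e (Ebar c' S))"
          by (rule absmap_abstr[where P="\<lambda>X. X \<in> Pufs"]) (simp_all add: Pufs_sw heq Ebar_Pufs[OF S])
        have "tau (e S) = Gmap e (tau S)" using htau[OF S] coalg_eq[OF S] by simp
        then have "(acls [] \<in> e S, \<lambda>a. Nbar a (e S), abstr c (Ebar c (e S)))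
              = (acls [] \<in> S, e \<circ> (\<lambda>a. Nbar a S), abstr c' (e (Ebar c' S)))"
          unfolding tau_eq Gmap_def c_def[symmetric] c'_def[symmetric] using am by simp
        then have C1: "(acls [] \<in> e S) = (acls [] \<in> S)"
          and C2: "\<And>a. Nbar a (e S) = e (Nbar a S)"
          and C3: "abstr c (Ebar c (e S)) = abstr c' (e (Ebar c' S))"
          by (simp_all add: fun_eq_iff)
        show "acls w \<in> e S \<longleftrightarrow> acls w \<in> S"
        proof (cases w)
          case Nil then show ?thesis using C1 by simp
        next
          case (Cons s v)
          have lv: "length v < length w" using Cons by simp
          show ?thesis
          proof (cases s)
            case (Nm a)
            have "acls (Nm a # v) \<in> e S \<longleftrightarrow> acls v \<in> Nbar a (e S)" by (simp add: mem_Nbar)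
            also have "\<dots> \<longleftrightarrow> acls v \<in> e (Nbar a S)" by (simp add: C2)
            also have "\<dots> \<longleftrightarrow> acls v \<in> Nbar a S" using "1.IH" lv Nbar_Pufs[OF S] by blast
            also have "\<dots> \<longleftrightarrow> acls (Nm a # v) \<in> S" by (simp add: mem_Nbar)
            finally show ?thesis using Cons Nm by simp
          next
            case (Br b)
            have "finite (supp (e S) \<union> supp S \<union> names v \<union> {c, c'})" using finE finS by simp
            then obtain d where d: "d \<notin> supp (e S) \<union> supp S \<union> names v \<union> {c, c'}"
              by (rule ex_fresh_fin[THEN exE])
            have fdE: "fresh d (Ebar c (e S))" using supp_Ebar[of c "e S"] d by (auto simp: fresh_def)
            then have "(d, sw c d (Ebar c (e S))) \<in> abstr c (Ebar c (e S))" by (simp add: abstr_mem)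
            then have "(d, sw c d (Ebar c (e S))) \<in> abstr c' (e (Ebar c' S))" using C3 by simp
            then have SW: "sw c d (Ebar c (e S)) = sw c' d (e (Ebar c' S))" using d by (auto simp: abstr_mem)
            have swe: "sw c d (e S) = e S" using fc d by (intro fresh_fix) (auto simp: fresh_def)
            have swS: "sw c' d S = S" using fc' d by (intro fresh_fix) (auto simp: fresh_def)
            define v' where "v' = sw b d v"
            have "d \<notin> fv v" using d fv_names by blast
            then have R1: "acls (Br b # v) = acls (Br d # v')" unfolding v'_def by (rule acls_Br_rename)
            have lv': "length (sw c' d v') < length w" using lv by (simp add: v'_def)
            have "acls (Br d # v') \<in> e S \<longleftrightarrow> acls (Br d # v') \<in> sw c d (e S)" by (simp add: swe)
            also have "\<dots> \<longleftrightarrow> sw c d (acls (Br d # v')) \<in> e S" by (rule mem_sw_set)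
            also have "\<dots> \<longleftrightarrow> acls (Br c # sw c d v') \<in> e S" by (simp add: acls_sw)
            also have "\<dots> \<longleftrightarrow> acls (sw c d v') \<in> Ebar c (e S)" by (simp add: mem_Ebar)
            also have "\<dots> \<longleftrightarrow> sw c d (acls v') \<in> Ebar c (e S)" by (simp add: acls_sw)
            also have "\<dots> \<longleftrightarrow> acls v' \<in> sw c d (Ebar c (e S))" by (rule mem_sw_set[symmetric])
            also have "\<dots> \<longleftrightarrow> acls v' \<in> sw c' d (e (Ebar c' S))" by (simp add: SW)
            also have "\<dots> \<longleftrightarrow> sw c' d (acls v') \<in> e (Ebar c' S)" by (rule mem_sw_set)
            also have "\<dots> \<longleftrightarrow> acls (sw c' d v') \<in> e (Ebar c' S)" by (simp add: acls_sw)
            also have "\<dots> \<longleftrightarrow> acls (sw c' d v') \<in> Ebar c' S" using "1.IH" lv' Ebar_Pufs[OF S] by blast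
            also have "\<dots> \<longleftrightarrow> acls (Br c' # sw c' d v') \<in> S" by (simp add: mem_Ebar)
            also have "\<dots> \<longleftrightarrow> sw c' d (acls (Br d # v')) \<in> S" by (simp add: acls_sw)
            also have "\<dots> \<longleftrightarrow> acls (Br d # v') \<in> sw c' d S" by (rule mem_sw_set[symmetric])
            also have "\<dots> \<longleftrightarrow> acls (Br d # v') \<in> S" by (simp add: swS)
            finally show ?thesis using Cons Br R1 by simp
          qed
        qed
      qed
    qed
    show "e S = S"
    proof (rule set_eqI)
      fix x
      have "e S \<subseteq> muF" using hPfs[OF S0] by (simp add: Pfs_def)
      moreover have "S \<subseteq> muF" using S0 by (simp add: Pufs_def)
      ultimately have "x \<in> e S \<or> x \<in> S \<Longrightarrow> \<exists>w. x = acls w" by (auto simp: muF_def)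
      then show "x \<in> e S \<longleftrightarrow> x \<in> S" using key S0 by blast
    qed
  qed
qed

end
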